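(* Let $(\Gamma,\rho)$ be a rooted voltage graph with finite voltage group $G$, let $V_r$ be the set of roots of $\Gamma$, and let $(\Gamma_r,\rho_r)$ be the voltage graph induced by $V_r$ (i.e. $\Gamma_r$ is the subgraph of $\Gamma$ induced by $V_r$ and $\rho_r$ the restriction of $\rho$ to its edges). Then for every $v_i\in V_r$, the local group of $(\Gamma_r,\rho_r)$ at $v_i$ equals the directed local group $G_i^*$ of $(\Gamma,\rho)$ at $v_i$.
   Context: $\Gamma=(V,E)$ simple digraph, $e_{ij}$ the edge $v_i\to v_j$, $\rho:E\to G$. Semi-walk $w=v_{i_1}a_1\dots a_{n-1}v_{i_n}$ with each $a_j\in\{e_{i_ji_{j+1}},e_{i_{j+1}i_j}\}$; walk if all $a_j=e_{i_ji_{j+1}}$; closed if $v_{i_1}=v_{i_n}$; path: walk with distinct vertices. Net voltage $f(w)=\bar\rho(a_1)\cdots\bar\rho(a_{n-1})$ with $\bar\rho(a_j)=\rho(a_j)$ for forward and $\rho(a_j)^{-1}$ for backward edges ($f=\mathbf 1$ on a single vertex). The local group of a voltage graph at $v_i$ is $\{f(w): w$ closed semi-walk at $v_i$ in that graph$\}$; the directed local group $G_i^*$ of $(\Gamma,\rho)$ is $\{f(w): w$ closed walk in $\Gamma$ at $v_i\}$. A root of $\Gamma$ is a vertex reachable by a path from every vertex; $\Gamma$ is rooted if it has a root. The induced subgraph on $V_r$ contains exactly the edges of $\Gamma$ between vertices of $V_r$. *)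

theory Defs
  imports "HOL-Algebra.Group"
begin

(* Parallel edges are impossible by
   construction; both e_ij and e_ji may be present. *)
definition simple_digraph :: "'v set \<Rightarrow> ('v \<times> 'v) set \<Rightarrow> bool" where
  "simple_digraph V E \<longleftrightarrow> finite V \<and> E \<subseteq> V \<times> V \<and> (\<forall>v. (v, v) \<notin> E)"

definition voltage_graph :: "('g, 'b) monoid_scheme \<Rightarrow> 'v set \<Rightarrow> ('v \<times> 'v) set \<Rightarrow> ('v \<times> 'v \<Rightarrow> 'g) \<Rightarrow> bool" where
  "voltage_graph G V E \<rho> \<longleftrightarrow> group G \<and> simple_digraph V E \<and> (\<forall>e\<in>E. \<rho> e \<in> carrier G)"

(* A semi-walk v_{i_1} a_1 ... a_{n-1} v_{i_n} is encoded by the vertex list vs = [v_{i_1},...,v_{i_n}]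
   (n >= 1) and a direction list ds of length n-1: ds!j = True means a_j is the forward edge
   e_{i_j i_{j+1}}, ds!j = False means a_j is the backward edge e_{i_{j+1} i_j}. *)
definition semi_walk :: "'v set \<Rightarrow> ('v \<times> 'v) set \<Rightarrow> 'v list \<Rightarrow> bool list \<Rightarrow> bool" where
  "semi_walk V E vs ds \<longleftrightarrow> vs \<noteq> [] \<and> set vs \<subseteq> V \<and> length ds = length vs - 1 \<and>
     (\<forall>j < length ds. if ds ! j then (vs ! j, vs ! Suc j) \<in> E else (vs ! Suc j, vs ! j) \<in> E)"

definition walk :: "'v set \<Rightarrow> ('v \<times> 'v) set \<Rightarrow> 'v list \<Rightarrow> bool list \<Rightarrow> bool" where
  "walk V E vs ds \<longleftrightarrow> semi_walk V E vs ds \<and> (\<forall>j < length ds. ds ! j)"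

definition closed_at :: "'v list \<Rightarrow> 'v \<Rightarrow> bool" where
  "closed_at vs v \<longleftrightarrow> vs \<noteq> [] \<and> hd vs = v \<and> last vs = v"

definition is_path :: "'v set \<Rightarrow> ('v \<times> 'v) set \<Rightarrow> 'v list \<Rightarrow> bool list \<Rightarrow> bool" where
  "is_path V E vs ds \<longleftrightarrow> walk V E vs ds \<and> distinct vs"

definition net_voltage :: "('g, 'b) monoid_scheme \<Rightarrow> ('v \<times> 'v \<Rightarrow> 'g) \<Rightarrow> 'v list \<Rightarrow> bool list \<Rightarrow> 'g" where
  "net_voltage G \<rho> vs ds =
     foldr (\<lambda>a b. a \<otimes>\<^bsub>G\<^esub> b)
       (map (\<lambda>j. if ds ! j then \<rho> (vs ! j, vs ! Suc j) else inv\<^bsub>G\<^esub> (\<rho> (vs ! Suc j, vs ! j)))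
            [0..<length ds])
       \<one>\<^bsub>G\<^esub>"

definition local_group :: "('g, 'b) monoid_scheme \<Rightarrow> 'v set \<Rightarrow> ('v \<times> 'v) set \<Rightarrow> ('v \<times> 'v \<Rightarrow> 'g) \<Rightarrow> 'v \<Rightarrow> 'g set" where
  "local_group G V E \<rho> v = {net_voltage G \<rho> vs ds | vs ds. semi_walk V E vs ds \<and> closed_at vs v}"

definition directed_local_group :: "('g, 'b) monoid_scheme \<Rightarrow> 'v set \<Rightarrow> ('v \<times> 'v) set \<Rightarrow> ('v \<times> 'v \<Rightarrow> 'g) \<Rightarrow> 'v \<Rightarrow> 'g set" where
  "directed_local_group G V E \<rho> v = {net_voltage G \<rho> vs ds | vs ds. walk V E vs ds \<and> closed_at vs v}"

definition is_root :: "'v set \<Rightarrow> ('v \<times> 'v) set \<Rightarrow> 'v \<Rightarrow> bool" where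
  "is_root V E r \<longleftrightarrow> r \<in> V \<and> (\<forall>v\<in>V. \<exists>vs ds. is_path V E vs ds \<and> hd vs = v \<and> last vs = r)"

definition rooted :: "'v set \<Rightarrow> ('v \<times> 'v) set \<Rightarrow> bool" where
  "rooted V E \<longleftrightarrow> (\<exists>r. is_root V E r)"

definition roots :: "'v set \<Rightarrow> ('v \<times> 'v) set \<Rightarrow> 'v set" where
  "roots V E = {r. is_root V E r}"

definition induced_edges :: "('v \<times> 'v) set \<Rightarrow> 'v set \<Rightarrow> ('v \<times> 'v) set" where
  "induced_edges E W = E \<inter> (W \<times> W)"

end

theory Submission
  imports Defs "HOL-Algebra.Multiplicative_Group" "HOL-Library.Transitive_Closure_Table"
begin

inductive dw for G :: "('g, 'b) monoid_scheme" and \<rho> :: "'v \<times> 'v \<Rightarrow> 'g" and W E' where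
  dw_base: "u \<in> W \<Longrightarrow> dw G \<rho> W E' u \<one>\<^bsub>G\<^esub> u"
| dw_step: "(u,w) \<in> E' \<Longrightarrow> u \<in> W \<Longrightarrow> dw G \<rho> W E' w g x \<Longrightarrow> dw G \<rho> W E' u (\<rho> (u,w) \<otimes>\<^bsub>G\<^esub> g) x"

inductive sw for G :: "('g, 'b) monoid_scheme" and \<rho> :: "'v \<times> 'v \<Rightarrow> 'g" and W E' where
  sw_base: "u \<in> W \<Longrightarrow> sw G \<rho> W E' u \<one>\<^bsub>G\<^esub> u"
| sw_step: "(u,w) \<in> E' \<Longrightarrow> u \<in> W \<Longrightarrow> sw G \<rho> W E' w g x \<Longrightarrow> sw G \<rho> W E' u (\<rho> (u,w) \<otimes>\<^bsub>G\<^esub> g) x"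
| sw_back: "(w,u) \<in> E' \<Longrightarrow> u \<in> W \<Longrightarrow> sw G \<rho> W E' w g x \<Longrightarrow> sw G \<rho> W E' u (inv\<^bsub>G\<^esub> (\<rho> (w,u)) \<otimes>\<^bsub>G\<^esub> g) x"

lemma nv_single: "net_voltage G \<rho> [x] [] = \<one>\<^bsub>G\<^esub>"
  by (simp add: net_voltage_def)

lemma nv_cons: "net_voltage G \<rho> (x#y#vs) (d#ds) =
   (if d then \<rho>(x,y) else inv\<^bsub>G\<^esub> (\<rho>(y,x))) \<otimes>\<^bsub>G\<^esub> net_voltage G \<rho> (y#vs) ds"
proof -
  have eq: "[0..<length (d#ds)] = 0 # map Suc [0..<length ds]"
    by (simp only: length_Cons upt_conv_Cons[OF zero_less_Suc] map_Suc_upt)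
  show ?thesis unfolding net_voltage_def eq by (simp add: o_def cong: if_cong del: upt_Suc)
qed

lemma semi_walk_Cons: "semi_walk V E (x#y#vs) (d#ds) \<longleftrightarrow>
   x \<in> V \<and> (if d then (x,y)\<in>E else (y,x)\<in>E) \<and> semi_walk V E (y#vs) ds"
  unfolding semi_walk_def by (auto simp: All_less_Suc2)

lemma semi_walk_single: "semi_walk V E [x] ds \<longleftrightarrow> x \<in> V \<and> ds = []"
  unfolding semi_walk_def by auto

lemma walk_Cons: "walk V E (x#y#vs) (d#ds) \<longleftrightarrow>
   d \<and> x \<in> V \<and> (x,y)\<in>E \<and> walk V E (y#vs) ds"
  unfolding walk_def semi_walk_def by (auto simp: All_less_Suc2)

lemma walk_single: "walk V E [x] ds \<longleftrightarrow> x \<in> V \<and> ds = []"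
  unfolding walk_def semi_walk_def by auto

lemma L1: "semi_walk W E' vs ds \<Longrightarrow> sw G \<rho> W E' (hd vs) (net_voltage G \<rho> vs ds) (last vs)"
proof (induction ds arbitrary: vs)
  case Nil
  then obtain x where "vs = [x]" unfolding semi_walk_def by (cases vs) auto
  with Nil show ?case by (auto simp: semi_walk_single nv_single intro: sw_base)
next
  case (Cons d ds)
  then obtain x y rest where vs: "vs = x#y#rest" unfolding semi_walk_def
    by (cases vs; cases "tl vs") auto
  with Cons.prems have h: "x \<in> W" "if d then (x,y)\<in>E' else (y,x)\<in>E'" "semi_walk W E' (y#rest) ds"
    by (auto simp: semi_walk_Cons)
  from Cons.IH[OF h(3)] have "sw G \<rho> W E' y (net_voltage G \<rho> (y#rest) ds) (last (y#rest))" by simp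
  with h show ?case unfolding vs nv_cons
    by (cases d) (auto intro: sw_step sw_back)
qed

lemma L3: "dw G \<rho> W E' a g b \<Longrightarrow>
  \<exists>vs ds. walk W E' vs ds \<and> hd vs = a \<and> last vs = b \<and> net_voltage G \<rho> vs ds = g"
proof (induction rule: dw.induct)
  case (dw_base u)
  then show ?case by (intro exI[of _ "[u]"] exI[of _ "[]"]) (simp add: walk_single nv_single)
next
  case (dw_step u w g x)
  then obtain vs ds where h: "walk W E' vs ds" "hd vs = w" "last vs = x" "net_voltage G \<rho> vs ds = g"
    by blast
  then obtain rest where vs: "vs = w#rest" unfolding walk_def semi_walk_def by (cases vs) auto
  show ?case
    by (intro exI[of _ "u#vs"] exI[of _ "True#ds"])
      (use h dw_step.hyps in \<open>auto simp: vs walk_Cons nv_cons\<close>)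
qed

lemma walk_reach: "walk V E vs ds \<Longrightarrow> k < length vs \<Longrightarrow> (hd vs, vs!k) \<in> E\<^sup>*"
proof (induction k)
  case 0
  then show ?case by (cases vs) auto
next
  case (Suc k)
  then have "k < length ds" unfolding walk_def semi_walk_def by auto
  with Suc.prems have "(vs!k, vs!Suc k) \<in> E" unfolding walk_def semi_walk_def by auto
  with Suc show ?case by (meson Suc_lessD rtrancl.rtrancl_into_rtrancl)
qed

lemma path_walk: "rtrancl_path (\<lambda>a b. (a,b)\<in>E) x xs y \<Longrightarrow> x \<in> V \<Longrightarrow> E \<subseteq> V \<times> V \<Longrightarrow>
   walk V E (x#xs) (replicate (length xs) True) \<and> last (x#xs) = y"
proof (induction rule: rtrancl_path.induct)
  case (base x)
  then show ?case by (simp add: walk_single)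
next
  case (step x y ys z)
  then have "y \<in> V" by auto
  with step show ?case by (auto simp: walk_Cons)
qed

lemma root_iff:
  assumes "E \<subseteq> V \<times> V"
  shows "is_root V E r \<longleftrightarrow> r \<in> V \<and> (\<forall>w\<in>V. (w,r) \<in> E\<^sup>*)"
proof
  assume ir: "is_root V E r"
  have "(w,r) \<in> E\<^sup>*" if w: "w \<in> V" for w
  proof -
    from ir w obtain vs ds where "walk V E vs ds" "hd vs = w" "last vs = r"
      unfolding is_root_def is_path_def by blast
    moreover then have "vs \<noteq> []" unfolding walk_def semi_walk_def by auto
    ultimately show "(w,r) \<in> E\<^sup>*" using walk_reach[of V E vs ds "length vs - 1"]
      by (simp add: last_conv_nth)
  qed
  then show "r \<in> V \<and> (\<forall>w\<in>V. (w,r) \<in> E\<^sup>*)" using ir unfolding is_root_def by blast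
next
  assume a: "r \<in> V \<and> (\<forall>w\<in>V. (w,r) \<in> E\<^sup>*)"
  show "is_root V E r" unfolding is_root_def
  proof (intro conjI ballI)
    show "r \<in> V" using a by simp
    fix w assume w: "w \<in> V"
    with a have "(\<lambda>a b. (a,b)\<in>E)\<^sup>*\<^sup>* w r" by (simp add: rtranclp_rtrancl_eq)
    then obtain xs where "rtrancl_path (\<lambda>a b. (a,b)\<in>E) w xs r"
      using rtranclp_eq_rtrancl_path by metis
    then obtain xs' where p: "rtrancl_path (\<lambda>a b. (a,b)\<in>E) w xs' r" "distinct (w#xs')"
      by (rule rtrancl_path_distinct)
    from path_walk[OF p(1) w assms] p(2)
    show "\<exists>vs ds. is_path V E vs ds \<and> hd vs = w \<and> last vs = r"
      unfolding is_path_def by fastforce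
  qed
qed

lemma dw_W: "dw G \<rho> W E' a g b \<Longrightarrow> a \<in> W"
  by (induction rule: dw.induct) auto

lemma dw_carrier: "dw G \<rho> W E' a g b \<Longrightarrow> group G \<Longrightarrow> (\<forall>e\<in>E'. \<rho> e \<in> carrier G) \<Longrightarrow> g \<in> carrier G"
proof (induction rule: dw.induct)
  case (dw_base u)
  then show ?case by (metis group.is_monoid monoid.one_closed)
next
  case (dw_step u w g x)
  then have "\<rho>(u,w) \<in> carrier G" "g \<in> carrier G" by auto
  with dw_step.prems show ?case by (metis group.is_monoid monoid.m_closed)
qed

lemma dw_trans: "dw G \<rho> W E' a g b \<Longrightarrow> dw G \<rho> W E' b h c \<Longrightarrow> group G \<Longrightarrow>
  (\<forall>e\<in>E'. \<rho> e \<in> carrier G) \<Longrightarrow> dw G \<rho> W E' a (g \<otimes>\<^bsub>G\<^esub> h) c"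
proof (induction rule: dw.induct)
  case (dw_base u)
  have "h \<in> carrier G" using dw_carrier[OF dw_base.prems] .
  then have "\<one>\<^bsub>G\<^esub> \<otimes>\<^bsub>G\<^esub> h = h" using dw_base.prems(2) by (metis group.is_monoid monoid.l_one)
  then show ?case using dw_base.prems(1) by simp
next
  case (dw_step u w g x)
  have hc: "h \<in> carrier G" using dw_carrier[OF dw_step.prems] .
  have gc: "g \<in> carrier G" using dw_carrier[OF dw_step.hyps(3) dw_step.prems(2,3)] .
  have rc: "\<rho>(u,w) \<in> carrier G" using dw_step.prems(3) dw_step.hyps(1) by blast
  have "\<rho>(u,w) \<otimes>\<^bsub>G\<^esub> g \<otimes>\<^bsub>G\<^esub> h = \<rho>(u,w) \<otimes>\<^bsub>G\<^esub> (g \<otimes>\<^bsub>G\<^esub> h)"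
    using dw_step.prems(2) hc gc rc by (metis group.is_monoid monoid.m_assoc)
  moreover have "dw G \<rho> W E' u (\<rho>(u,w) \<otimes>\<^bsub>G\<^esub> (g \<otimes>\<^bsub>G\<^esub> h)) c"
    using dw_step.hyps(1,2) dw_step.IH[OF dw_step.prems] by (rule dw.dw_step)
  ultimately show ?case by simp
qed

lemma dw_pow: "dw G \<rho> W E' a c a \<Longrightarrow> group G \<Longrightarrow>
  (\<forall>e\<in>E'. \<rho> e \<in> carrier G) \<Longrightarrow> dw G \<rho> W E' a (c [^]\<^bsub>G\<^esub> (n::nat)) a"
proof (induction n)
  case 0
  have "c [^]\<^bsub>G\<^esub> (0::nat) = \<one>\<^bsub>G\<^esub>" by simp
  then show ?case using dw_base[OF dw_W[OF "0.prems"(1)]] by simp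
next
  case (Suc n)
  have "c [^]\<^bsub>G\<^esub> Suc n = c [^]\<^bsub>G\<^esub> n \<otimes>\<^bsub>G\<^esub> c" by simp
  with dw_trans[OF Suc.IH[OF Suc.prems] Suc.prems(1) Suc.prems(2,3)] show ?case by simp
qed

lemma dw_mono: "dw G \<rho> W E' a g b \<Longrightarrow> W \<subseteq> W' \<Longrightarrow> E' \<subseteq> E'' \<Longrightarrow> dw G \<rho> W' E'' a g b"
proof (induction rule: dw.induct)
  case (dw_base u)
  then show ?case by (simp add: subset_iff dw.dw_base)
next
  case (dw_step u w g x)
  then have "(u,w) \<in> E''" "u \<in> W'" by auto
  then show ?case using dw_step.IH[OF dw_step.prems] by (rule dw.dw_step)
qed

lemma key:
  assumes sw: "sw G \<rho> W E' a g b" and grp: "group G" and fin: "finite (carrier G)"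
    and car: "\<forall>e\<in>E'. \<rho> e \<in> carrier G"
    and conn: "\<And>x y. x \<in> W \<Longrightarrow> y \<in> W \<Longrightarrow> \<exists>h. dw G \<rho> W E' x h y"
    and EW: "E' \<subseteq> W \<times> W"
  shows "dw G \<rho> W E' a g b"
  using sw
proof (induction rule: sw.induct)
  case (sw_base u)
  then show ?case by (rule dw_base)
next
  case (sw_step u w g x)
  show ?case using sw_step.hyps(1,2) sw_step.IH by (rule dw_step)
next
  case (sw_back w u g x)
  interpret group G by (rule grp)
  from sw_back.hyps EW have wW: "w \<in> W" by auto
  from conn[OF sw_back.hyps(2) wW] obtain h where h: "dw G \<rho> W E' u h w" by blast
  have r: "\<rho>(w,u) \<in> carrier G" using car sw_back.hyps by auto
  have hc: "h \<in> carrier G" using dw_carrier[OF h grp car] .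
  define c where "c = \<rho>(w,u) \<otimes>\<^bsub>G\<^esub> h"
  have cc: "c \<in> carrier G" using r hc c_def by simp
  have dc: "dw G \<rho> W E' w c w" unfolding c_def
    using dw_step[OF sw_back.hyps(1) wW h] .
  define N where "N = order G"
  have "N > 0" unfolding N_def order_def using fin one_closed
    by (auto simp: card_gt_0_iff)
  have cN: "c [^]\<^bsub>G\<^esub> N = \<one>\<^bsub>G\<^esub>" unfolding N_def by (rule pow_order_eq_1[OF cc])
  have "\<rho>(w,u) \<otimes>\<^bsub>G\<^esub> (h \<otimes>\<^bsub>G\<^esub> c [^]\<^bsub>G\<^esub> (N - 1)) = c \<otimes>\<^bsub>G\<^esub> c [^]\<^bsub>G\<^esub> (N-1)"
    unfolding c_def using r hc by (simp add: m_assoc)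
  also have "\<dots> = c [^]\<^bsub>G\<^esub> N" using \<open>N > 0\<close> cc nat_pow_Suc2[OF cc, of "N-1"] by simp
  finally have e1: "\<rho>(w,u) \<otimes>\<^bsub>G\<^esub> (h \<otimes>\<^bsub>G\<^esub> c [^]\<^bsub>G\<^esub> (N - 1)) = \<one>\<^bsub>G\<^esub>" using cN by simp
  have hcN: "h \<otimes>\<^bsub>G\<^esub> c [^]\<^bsub>G\<^esub> (N - 1) \<in> carrier G" using hc cc by simp
  have iv: "inv\<^bsub>G\<^esub> (\<rho>(w,u)) = h \<otimes>\<^bsub>G\<^esub> c [^]\<^bsub>G\<^esub> (N - 1)"
    by (rule inv_equality[OF inv_comm[OF e1 r hcN] r hcN])
  have "dw G \<rho> W E' u (h \<otimes>\<^bsub>G\<^esub> c [^]\<^bsub>G\<^esub> (N - 1)) w"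
    by (rule dw_trans[OF h dw_pow[OF dc grp car] grp car])
  from dw_trans[OF this sw_back.IH grp car] show ?case
    using iv by simp
qed

theorem lemma8:
  fixes G :: "('g, 'b) monoid_scheme" and V :: "'v set" and E :: "('v \<times> 'v) set"
    and \<rho> :: "'v \<times> 'v \<Rightarrow> 'g" and v :: 'v
  assumes "voltage_graph G V E \<rho>"
    and "finite (carrier G)"
    and "rooted V E"
    and "v \<in> roots V E"
  shows "local_group G (roots V E) (induced_edges E (roots V E)) \<rho> v
         = directed_local_group G V E \<rho> v"
proof -
  define R where "R = roots V E"
  define ER where "ER = induced_edges E R"
  have grp: "group G" and EV: "E \<subseteq> V \<times> V" and car: "\<forall>e\<in>E. \<rho> e \<in> carrier G"
    using assms(1) unfolding voltage_graph_def simple_digraph_def by auto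
  have Rdef: "\<And>r. r \<in> R \<longleftrightarrow> r \<in> V \<and> (\<forall>w\<in>V. (w,r) \<in> E\<^sup>*)"
    unfolding R_def roots_def using root_iff[OF EV] by simp
  have inV: "\<And>x y. (x,y) \<in> E\<^sup>* \<Longrightarrow> x \<in> V \<Longrightarrow> y \<in> V"
  proof -
    fix x y assume "(x,y) \<in> E\<^sup>*" "x \<in> V"
    then show "y \<in> V" by (induction rule: rtrancl_induct) (use EV in auto)
  qed
  have clos: "\<And>r c. r \<in> R \<Longrightarrow> (r,c) \<in> E\<^sup>* \<Longrightarrow> c \<in> R"
    using Rdef inV by (meson rtrancl_trans)
  have ERsub: "ER \<subseteq> R \<times> R" "ER \<subseteq> E" unfolding ER_def induced_edges_def by auto
  have RV: "R \<subseteq> V" using Rdef by auto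
  have strong: "\<And>a b. a \<in> R \<Longrightarrow> b \<in> R \<Longrightarrow> (a,b) \<in> ER\<^sup>*"
  proof -
    fix a b assume a: "a \<in> R" and b: "b \<in> R"
    then have "(a,b) \<in> E\<^sup>*" using Rdef by auto
    then have "(a,b) \<in> ER\<^sup>* \<and> b \<in> R"
    proof (induction rule: rtrancl_induct)
      case base
      then show ?case using a by simp
    next
      case (step y z)
      then have "z \<in> R" using clos by blast
      with step have "(y,z) \<in> ER" unfolding ER_def induced_edges_def by auto
      with step show ?case by (meson rtrancl.rtrancl_into_rtrancl \<open>z \<in> R\<close>)
    qed
    then show "(a,b) \<in> ER\<^sup>*" by simp
  qed
  have conn: "\<And>x y. x \<in> R \<Longrightarrow> y \<in> R \<Longrightarrow> \<exists>h. dw G \<rho> R ER x h y"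
  proof -
    fix x y assume x: "x \<in> R" and y: "y \<in> R"
    from strong[OF x y] show "\<exists>h. dw G \<rho> R ER x h y"
    proof (induction rule: converse_rtrancl_induct)
      case base
      then show ?case using y dw_base by metis
    next
      case (step a z)
      then obtain g where "dw G \<rho> R ER z g y" by blast
      moreover have "a \<in> R" using step ERsub by auto
      ultimately show ?case using step dw_step by metis
    qed
  qed
  have carR: "\<forall>e\<in>ER. \<rho> e \<in> carrier G" using car ERsub by auto
  have vR: "v \<in> R" using assms(4) R_def by simp
  have "local_group G R ER \<rho> v = directed_local_group G V E \<rho> v"
  proof
    show "local_group G R ER \<rho> v \<subseteq> directed_local_group G V E \<rho> v"
    proof
      fix g assume "g \<in> local_group G R ER \<rho> v"
      then obtain vs ds where h: "g = net_voltage G \<rho> vs ds" "semi_walk R ER vs ds" "closed_at vs v"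
        unfolding local_group_def by blast
      from L1[OF h(2)] h(3) have "sw G \<rho> R ER v g v" unfolding closed_at_def h(1) by simp
      from key[OF this grp assms(2) carR conn ERsub(1)] have "dw G \<rho> R ER v g v" .
      from dw_mono[OF this RV ERsub(2)] have "dw G \<rho> V E v g v" .
      from L3[OF this] obtain vs ds where
        w: "walk V E vs ds" "hd vs = v" "last vs = v" "net_voltage G \<rho> vs ds = g" by blast
      then have "vs \<noteq> []" unfolding walk_def semi_walk_def by auto
      with w show "g \<in> directed_local_group G V E \<rho> v"
        unfolding directed_local_group_def closed_at_def by blast
    qed
  next
    show "directed_local_group G V E \<rho> v \<subseteq> local_group G R ER \<rho> v"
    proof
      fix g assume "g \<in> directed_local_group G V E \<rho> v"
      then obtain vs ds where h: "g = net_voltage G \<rho> vs ds" "walk V E vs ds" "closed_at vs v"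
        unfolding directed_local_group_def by blast
      have allR: "\<And>k. k < length vs \<Longrightarrow> vs ! k \<in> R"
        using walk_reach[OF h(2)] h(3) clos vR unfolding closed_at_def by blast
      have sw: "semi_walk R ER vs ds"
        unfolding semi_walk_def
      proof (intro conjI allI impI)
        show "vs \<noteq> []" using h(2) unfolding walk_def semi_walk_def by auto
        show "set vs \<subseteq> R" using allR by (auto simp: in_set_conv_nth)
        show "length ds = length vs - 1" using h(2) unfolding walk_def semi_walk_def by auto
        fix j assume j: "j < length ds"
        then have "ds ! j" "(vs!j, vs!Suc j) \<in> E" using h(2) unfolding walk_def semi_walk_def by auto
        moreover have "j < length vs" "Suc j < length vs"
          using j h(2) unfolding walk_def semi_walk_def by auto
        ultimately show "if ds ! j then (vs ! j, vs ! Suc j) \<in> ER else (vs ! Suc j, vs ! j) \<in> ER"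
          using allR unfolding ER_def induced_edges_def by auto
      qed
      then show "g \<in> local_group G R ER \<rho> v"
        unfolding local_group_def using h by blast
    qed
  qed
  then show ?thesis unfolding R_def ER_def .
qed

end
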